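(* Let $X$ be a simple act taking values $x_1,\dots,x_n$ in an outcome set $\mathcal{X}$ with probabilities $p_i>0$, $\sum_{i=1}^n p_i=1$, let $u:\mathcal{X}\to\mathbb{R}$ and $u_i=u(x_i)$, and let $\beta\in(-1,\infty)$. Define $v^{(0)}=\sum_{i=1}^n p_iu_i$ and, for $k=1,2,\dots$, $v^{(k)}=\sum_{i=1}^n\tilde p_i^{(k)}u_i$, where $w_i^{(k)}=p_i$ if $u_i\ge v^{(k-1)}$, $w_i^{(k)}=(1+\beta)p_i$ if $u_i<v^{(k-1)}$, and $\tilde p_i^{(k)}=w_i^{(k)}/\sum_{j=1}^n w_j^{(k)}$. Then the sequence $(v^{(k)})$ converges monotonically, in at most $n-1$ steps, to $\mathbb{E}_\beta[u(X)]$.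
   Context: $\mathbb{E}_\beta[u(X)]$ is the unique $v\in\mathbb{R}$ with $\mathbb{E}[(u(X)-v)^+]=(1+\beta)\mathbb{E}[(v-u(X))^+]$, i.e. $\sum_i p_i(u_i-v)^+=(1+\beta)\sum_ip_i(v-u_i)^+$. *)

theory Defs
  imports Complex_Main
begin

definition E_beta :: "nat \<Rightarrow> (nat \<Rightarrow> real) \<Rightarrow> (nat \<Rightarrow> real) \<Rightarrow> real \<Rightarrow> real" where
  "E_beta n p u \<beta> = (THE v. (\<Sum>i=1..n. p i * max (u i - v) 0)
                           = (1 + \<beta>) * (\<Sum>i=1..n. p i * max (v - u i) 0))"

definition iter_weight :: "(nat \<Rightarrow> real) \<Rightarrow> (nat \<Rightarrow> real) \<Rightarrow> real \<Rightarrow> real \<Rightarrow> nat \<Rightarrow> real" where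
  "iter_weight p u \<beta> v i = (if u i \<ge> v then p i else (1 + \<beta>) * p i)"

primrec v_iter :: "nat \<Rightarrow> (nat \<Rightarrow> real) \<Rightarrow> (nat \<Rightarrow> real) \<Rightarrow> real \<Rightarrow> nat \<Rightarrow> real" where
  "v_iter n p u \<beta> 0 = (\<Sum>i=1..n. p i * u i)"
| "v_iter n p u \<beta> (Suc k) =
     (\<Sum>i=1..n. (iter_weight p u \<beta> (v_iter n p u \<beta> k) i
                 / (\<Sum>j=1..n. iter_weight p u \<beta> (v_iter n p u \<beta> k) j)) * u i)"

end

theory Submission
  imports Defs
begin

declare v_iter.simps[simp del]

context
  fixes n :: nat and p u :: "nat \<Rightarrow> real" and \<beta> :: real
  assumes ppos: "\<forall>i\<in>{1..n}. p i > 0" and psum: "(\<Sum>i=1..n. p i) = 1" and bgt: "\<beta> > -1"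
begin

abbreviation "ww \<equiv> iter_weight p u \<beta>"
abbreviation "VV \<equiv> v_iter n p u \<beta>"
definition "WW c = (\<Sum>i=1..n. ww c i)"
definition "NN c = (\<Sum>i=1..n. ww c i * u i) / WW c"
definition "FF v = (\<Sum>i=1..n. ww v i * (u i - v))"
definition "AA c = {i\<in>{1..n}. u i < c}"

lemma n_pos: "n \<ge> 1"
  using psum by (cases n) auto

lemma w_pos: "i \<in> {1..n} \<Longrightarrow> ww c i > 0"
  unfolding iter_weight_def using ppos bgt by auto

lemma W_pos: "WW c > 0"
  unfolding WW_def using w_pos n_pos by (intro sum_pos) auto

lemma V_Suc: "VV (Suc k) = NN (VV k)"
  by (simp add: NN_def WW_def sum_divide_distrib v_iter.simps)

lemma G_expand: "(\<Sum>i=1..n. ww c i * (u i - v)) = (\<Sum>i=1..n. ww c i * u i) - v * WW c"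
proof -
  have "(\<Sum>i=1..n. ww c i * (u i - v)) = (\<Sum>i=1..n. ww c i * u i - v * ww c i)"
    by (rule sum.cong) (auto simp: algebra_simps)
  also have "\<dots> = (\<Sum>i=1..n. ww c i * u i) - v * WW c"
    by (simp add: WW_def sum_subtractf sum_distrib_left)
  finally show ?thesis .
qed

lemma F_eq: "FF c = WW c * (NN c - c)"
proof -
  have "FF c = (\<Sum>i=1..n. ww c i * u i) - c * WW c" unfolding FF_def by (rule G_expand)
  moreover have "WW c * (NN c - c) = (\<Sum>i=1..n. ww c i * u i) - c * WW c"
    using W_pos[of c] unfolding NN_def by (simp add: right_diff_distrib)
  ultimately show ?thesis by simp
qed

lemma G_zero: "(\<Sum>i=1..n. ww c i * (u i - NN c)) = 0"
  using W_pos[of c] unfolding G_expand NN_def by (simp add: field_simps)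

lemma cmp_ge: assumes "\<beta> \<ge> 0" shows "FF v \<le> (\<Sum>i=1..n. ww c i * (u i - v))"
  unfolding FF_def
proof (rule sum_mono)
  fix i assume i: "i \<in> {1..n}"
  have p: "p i > 0" using i ppos by auto
  show "ww v i * (u i - v) \<le> ww c i * (u i - v)"
  proof (cases "u i \<ge> v")
    case True
    have "0 \<le> \<beta> * p i * (u i - v)" using True p assms by simp
    then show ?thesis using True by (auto simp: iter_weight_def algebra_simps)
  next
    case False
    have "\<beta> * p i * (u i - v) \<le> 0" using False p assms
      by (simp add: mult_nonneg_nonpos)
    then show ?thesis using False by (auto simp: iter_weight_def algebra_simps)
  qed
qed

lemma cmp_le: assumes "\<beta> \<le> 0" shows "FF v \<ge> (\<Sum>i=1..n. ww c i * (u i - v))"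
  unfolding FF_def
proof (rule sum_mono)
  fix i assume i: "i \<in> {1..n}"
  have p: "p i > 0" using i ppos by auto
  show "ww c i * (u i - v) \<le> ww v i * (u i - v)"
  proof (cases "u i \<ge> v")
    case True
    have "\<beta> * p i * (u i - v) \<le> 0" using True p assms
      by (simp add: mult_nonpos_nonneg)
    then show ?thesis using True by (auto simp: iter_weight_def algebra_simps)
  next
    case False
    have "\<beta> * p i \<le> 0" using p assms by (simp add: mult_nonpos_nonneg)
    then have "0 \<le> \<beta> * p i * (u i - v)" using False
      by (simp add: mult_nonpos_nonpos)
    then show ?thesis using False by (auto simp: iter_weight_def algebra_simps)
  qed
qed

lemma w_A: "i \<in> {1..n} \<Longrightarrow> ww c i = (if i \<in> AA c then (1+\<beta>) * p i else p i)"
  by (auto simp: iter_weight_def AA_def)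

lemma N_A: assumes "AA c = AA c'" shows "NN c = NN c'"
proof -
  have e: "\<And>i. i \<in> {1..n} \<Longrightarrow> ww c i = ww c' i" using assms w_A by simp
  have 1: "(\<Sum>i=1..n. ww c i * u i) = (\<Sum>i=1..n. ww c' i * u i)"
    by (rule sum.cong) (auto simp: e)
  have 2: "(\<Sum>i=1..n. ww c i) = (\<Sum>i=1..n. ww c' i)"
    by (rule sum.cong) (auto simp: e)
  show ?thesis unfolding NN_def WW_def using 1 2 by simp
qed

lemma N_empty: assumes "AA c = {}" shows "NN c = VV 0"
proof -
  have e: "\<And>i. i \<in> {1..n} \<Longrightarrow> ww c i = p i" using assms w_A by simp
  have 1: "(\<Sum>i=1..n. ww c i * u i) = (\<Sum>i=1..n. p i * u i)"
    by (rule sum.cong) (auto simp: e)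
  have 2: "(\<Sum>i=1..n. ww c i) = (\<Sum>i=1..n. p i)"
    by (rule sum.cong) (auto simp: e)
  show ?thesis unfolding NN_def WW_def using 1 2 psum by (simp add: v_iter.simps)
qed

lemma N_full: assumes "AA c = {1..n}" shows "NN c = VV 0"
proof -
  have e: "\<And>i. i \<in> {1..n} \<Longrightarrow> ww c i = (1+\<beta>) * p i" using assms w_A by simp
  have "NN c = (\<Sum>i=1..n. (1+\<beta>) * p i * u i) / (\<Sum>i=1..n. (1+\<beta>) * p i)"
  proof -
    have 1: "(\<Sum>i=1..n. ww c i * u i) = (\<Sum>i=1..n. (1+\<beta>) * p i * u i)"
      by (rule sum.cong) (auto simp: e)
    have 2: "(\<Sum>i=1..n. ww c i) = (\<Sum>i=1..n. (1+\<beta>) * p i)"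
      by (rule sum.cong) (auto simp: e)
    show ?thesis unfolding NN_def WW_def using 1 2 by simp
  qed
  also have "\<dots> = ((1+\<beta>) * (\<Sum>i=1..n. p i * u i)) / ((1+\<beta>) * (\<Sum>i=1..n. p i))"
    by (simp add: sum_distrib_left mult.assoc)
  also have "\<dots> = VV 0" using psum bgt by (simp add: v_iter.simps)
  finally show ?thesis .
qed

lemma V_eq_N: "\<exists>c. VV k = NN c"
proof (cases k)
  case 0
  have "AA (Min (u ` {1..n})) = {}" unfolding AA_def by auto
  then show ?thesis using 0 N_empty by metis
next
  case (Suc m) then show ?thesis using V_Suc by blast
qed

lemma V_anti: assumes "\<beta> \<ge> 0" shows "antimono VV"
  unfolding decseq_Suc_iff
proof
  fix k
  obtain c where c: "VV k = NN c" using V_eq_N by blast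
  have "FF (VV k) \<le> 0" using cmp_ge[OF assms, where v="NN c" and c=c] G_zero c by simp
  then have "WW (VV k) * (NN (VV k) - VV k) \<le> 0" using F_eq by simp
  then have "NN (VV k) - VV k \<le> 0" using W_pos[of "VV k"] by (simp add: mult_le_0_iff)
  then show "VV (Suc k) \<le> VV k" using V_Suc by simp
qed

lemma V_mono: assumes "\<beta> \<le> 0" shows "mono VV"
  unfolding incseq_Suc_iff
proof
  fix k
  obtain c where c: "VV k = NN c" using V_eq_N by blast
  have "FF (VV k) \<ge> 0" using cmp_le[OF assms, where v="NN c" and c=c] G_zero c by simp
  then have "WW (VV k) * (NN (VV k) - VV k) \<ge> 0" using F_eq by simp
  then have "NN (VV k) - VV k \<ge> 0" using W_pos[of "VV k"] by (simp add: zero_le_mult_iff)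
  then show "VV k \<le> VV (Suc k)" using V_Suc by simp
qed

lemma V_monoor: "mono VV \<or> antimono VV"
  using V_anti V_mono by fastforce

lemma stab: assumes "VV (Suc k) = VV k" shows "VV (k + m) = VV k"
proof (induction m)
  case 0 then show ?case by simp
next
  case (Suc m)
  have "VV (k + Suc m) = NN (VV (k + m))" using V_Suc by simp
  also have "\<dots> = NN (VV k)" using Suc by simp
  also have "\<dots> = VV k" using V_Suc assms by simp
  finally show ?case .
qed

lemma F_strict: assumes "a < b" shows "FF b < FF a"
  unfolding FF_def
proof (rule sum_strict_mono)
  show "finite {1..n}" by simp
  show "{1..n} \<noteq> {}" using n_pos by simp
  fix i assume i: "i \<in> {1..n}"
  have p: "p i > 0" using i ppos by auto
  have q: "(1+\<beta>) * p i > 0" using p bgt by simp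
  show "ww b i * (u i - b) < ww a i * (u i - a)"
  proof (cases "u i \<ge> b")
    case True
    then show ?thesis using assms p by (auto simp: iter_weight_def)
  next
    case False
    show ?thesis
    proof (cases "u i \<ge> a")
      case True
      have "(1+\<beta>) * p i * (u i - b) < 0" using q False by (simp add: mult_pos_neg)
      moreover have "p i * (u i - a) \<ge> 0" using p True by simp
      ultimately show ?thesis using True False by (auto simp: iter_weight_def)
    next
      case F2: False
      have "(1+\<beta>) * p i * (u i - b) < (1+\<beta>) * p i * (u i - a)"
        using q assms by (intro mult_strict_left_mono) auto
      then show ?thesis using F2 False by (auto simp: iter_weight_def)
    qed
  qed
qed

lemma E_char: "FF v = (\<Sum>i=1..n. p i * max (u i - v) 0) - (1 + \<beta>) * (\<Sum>i=1..n. p i * max (v - u i) 0)"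
proof -
  have "FF v = (\<Sum>i=1..n. p i * max (u i - v) 0 - (1 + \<beta>) * (p i * max (v - u i) 0))"
    unfolding FF_def
  proof (rule sum.cong)
    fix i show "ww v i * (u i - v) = p i * max (u i - v) 0 - (1 + \<beta>) * (p i * max (v - u i) 0)"
      by (cases "u i \<ge> v") (simp_all add: iter_weight_def max_def algebra_simps)
  qed simp
  also have "\<dots> = (\<Sum>i=1..n. p i * max (u i - v) 0) - (1 + \<beta>) * (\<Sum>i=1..n. p i * max (v - u i) 0)"
    by (simp add: sum_subtractf sum_distrib_left)
  finally show ?thesis .
qed

lemma E_unique: assumes "FF v = 0" shows "E_beta n p u \<beta> = v"
  unfolding E_beta_def
proof (rule the_equality)
  show "(\<Sum>i=1..n. p i * max (u i - v) 0) = (1 + \<beta>) * (\<Sum>i=1..n. p i * max (v - u i) 0)"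
    using assms E_char[of v] by simp
next
  fix y assume "(\<Sum>i=1..n. p i * max (u i - y) 0) = (1 + \<beta>) * (\<Sum>i=1..n. p i * max (y - u i) 0)"
  then have y: "FF y = 0" using E_char[of y] by simp
  show "y = v"
  proof (rule linorder_cases[of y v])
    assume "y < v" then show ?thesis using F_strict[of y v] y assms by simp
  next
    assume "v < y" then show ?thesis using F_strict[of v y] y assms by simp
  qed
qed

lemma AA_fin: "finite (AA c)" and AA_sub: "AA c \<subseteq> {1..n}"
  unfolding AA_def by auto

lemma main_stab: "VV n = VV (n-1)"
proof (rule ccontr)
  assume ne: "VV n \<noteq> VV (n-1)"
  have ns: "VV (Suc k) \<noteq> VV k" if "k \<le> n-1" for k
  proof
    assume h: "VV (Suc k) = VV k"
    have "VV (k + (n-1-k)) = VV k" "VV (k + (n - k)) = VV k" using stab[OF h] by blast+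
    moreover have "k + (n-1-k) = n-1" "k + (n-k) = n" using that n_pos by auto
    ultimately show False using ne by simp
  qed
  have proper: "AA (VV k) \<noteq> {} \<and> AA (VV k) \<noteq> {1..n}" if "k \<le> n-1" for k
  proof -
    have "VV (Suc k) \<noteq> VV 0"
    proof
      assume eq: "VV (Suc k) = VV 0"
      from V_monoor have "VV k = VV (Suc k)"
      proof
        assume m: "mono VV"
        have "VV 0 \<le> VV k" "VV k \<le> VV (Suc k)"
          using monoD[OF m, of 0 k] monoD[OF m, of k "Suc k"] by simp_all
        then show ?thesis using eq by simp
      next
        assume m: "antimono VV"
        have "VV k \<le> VV 0" "VV (Suc k) \<le> VV k"
          using antimonoD[OF m, of 0 k] antimonoD[OF m, of k "Suc k"] by simp_all
        then show ?thesis using eq by simp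
      qed
      with ns[OF that] show False by simp
    qed
    then show ?thesis using N_empty[of "VV k"] N_full[of "VV k"] V_Suc[of k] by auto
  qed
  have step: "AA (VV (Suc k)) \<noteq> AA (VV k)" if "Suc k \<le> n-1" for k
    using ns[OF that] N_A[of "VV (Suc k)" "VV k"] V_Suc[of "Suc k"] V_Suc[of k] by auto
  define f where "f k = card (AA (VV k))" for k
  have bounds: "1 \<le> f k \<and> f k \<le> n-1" if "k \<le> n-1" for k
  proof -
    have "AA (VV k) \<subset> {1..n}" using proper[OF that] AA_sub by blast
    then have "card (AA (VV k)) < card {1..n}" by (intro psubset_card_mono) auto
    moreover have "card (AA (VV k)) \<noteq> 0" using proper[OF that] AA_fin by simp
    ultimately show ?thesis unfolding f_def by simp
  qed
  from V_monoor show False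
  proof
    assume m: "mono VV"
    have sub: "AA (VV k) \<subseteq> AA (VV (Suc k))" for k
      using monoD[OF m, of k "Suc k"] by (auto simp: AA_def)
    have "f k \<ge> f 0 + k" if "k \<le> n-1" for k
      using that
    proof (induction k)
      case 0 show ?case by simp
    next
      case (Suc k)
      have "AA (VV k) \<subset> AA (VV (Suc k))" using sub[of k] step[of k] Suc.prems by auto
      then have "f k < f (Suc k)" unfolding f_def by (intro psubset_card_mono AA_fin)
      with Suc show ?case by simp
    qed
    from this[of "n-1"] bounds[of 0] bounds[of "n-1"] show False by linarith
  next
    assume m: "antimono VV"
    have sub: "AA (VV (Suc k)) \<subseteq> AA (VV k)" for k
      using antimonoD[OF m, of k "Suc k"] by (auto simp: AA_def)
    have "f k + k \<le> f 0" if "k \<le> n-1" for k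
      using that
    proof (induction k)
      case 0 show ?case by simp
    next
      case (Suc k)
      have "AA (VV (Suc k)) \<subset> AA (VV k)" using sub[of k] step[of k] Suc.prems by auto
      then have "f (Suc k) < f k" unfolding f_def by (intro psubset_card_mono AA_fin)
      with Suc show ?case by simp
    qed
    from this[of "n-1"] bounds[of 0] bounds[of "n-1"] show False by linarith
  qed
qed

lemma final: "(mono VV \<or> antimono VV) \<and> (\<forall>k\<ge>n - 1. VV k = E_beta n p u \<beta>)"
proof -
  have s: "VV (Suc (n-1)) = VV (n-1)" using main_stab n_pos by simp
  have "FF (VV (n-1)) = 0"
    using F_eq[of "VV (n-1)"] V_Suc[of "n-1"] s by simp
  then have E: "E_beta n p u \<beta> = VV (n-1)" by (rule E_unique)
  have "VV k = VV (n-1)" if "k \<ge> n-1" for k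
  proof -
    have eq: "n - 1 + (k - (n - 1)) = k" using that by simp
    show ?thesis using stab[OF s, of "k - (n-1)"] unfolding eq .
  qed
  then have "\<forall>k\<ge>n - 1. VV k = E_beta n p u \<beta>" using E by metis
  with V_monoor show ?thesis by blast
qed

end

theorem theorem7:
  fixes n :: nat and x :: "nat \<Rightarrow> 'x" and U :: "'x \<Rightarrow> real"
    and p :: "nat \<Rightarrow> real" and \<beta> :: real
  assumes "\<forall>i\<in>{1..n}. p i > 0"
    and "(\<Sum>i=1..n. p i) = 1"
    and "\<beta> > -1"
  shows "(mono (v_iter n p (\<lambda>i. U (x i)) \<beta>) \<or> antimono (v_iter n p (\<lambda>i. U (x i)) \<beta>))
       \<and> (\<forall>k\<ge>n - 1. v_iter n p (\<lambda>i. U (x i)) \<beta> k = E_beta n p (\<lambda>i. U (x i)) \<beta>)"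
  using final[OF assms] .

end
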